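(* (a) Every countably tight $L$-selective space is Fr\'echet. (b) Every countable subspace of an $L$-selective space is Fr\'echet. (c) Every strongly $L$-selective space is Fr\'echet.
   Context: All spaces are assumed $T_1$. For spaces $Y$, $X$, a map $\varphi:Y\to\mathcal P(X)\setminus\{\emptyset\}$ is lower semicontinuous (l.s.c.) if $\{y:\varphi(y)\cap U\neq\emptyset\}$ is open in $Y$ for every open $U\subseteq X$; a selection is a map $f:Y\to X$ with $f(y)\in\varphi(y)$ for all $y$. $X$ is strongly $Y$-selective if every l.s.c. map $Y\to\mathcal P(X)\setminus\{\emptyset\}$ has a continuous selection, and $Y$-selective if every l.s.c. map from $Y$ to the nonempty closed subsets of $X$ has a continuous selection. (Strongly) $L$-selective means (strongly) $(\omega+1)$-selective, with $\omega+1$ carrying the order topology. A space is Fr\'echet if whenever $x\in\overline A$ there is a sequence in $A$ converging to $x$; countably tight if whenever $x\in\overline A$ there is a countable $B\subseteq A$ with $x\in\overline B$. *)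

theory Defs
  imports "HOL-Analysis.Analysis" "HOL-Library.Extended_Nat" "HOL-Library.Extended_Real"
begin

definition omega_plus_one :: "enat topology" where
  "omega_plus_one = euclidean"

definition lsc_map :: "'b topology \<Rightarrow> 'a topology \<Rightarrow> ('b \<Rightarrow> 'a set) \<Rightarrow> bool" where
  "lsc_map Y X \<phi> \<longleftrightarrow>
     (\<forall>y\<in>topspace Y. \<phi> y \<subseteq> topspace X \<and> \<phi> y \<noteq> {}) \<and>
     (\<forall>U. openin X U \<longrightarrow> openin Y {y \<in> topspace Y. \<phi> y \<inter> U \<noteq> {}})"

definition strongly_selective :: "'b topology \<Rightarrow> 'a topology \<Rightarrow> bool" where
  "strongly_selective Y X \<longleftrightarrow>
     (\<forall>\<phi>. lsc_map Y X \<phi> \<longrightarrow>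
        (\<exists>f. continuous_map Y X f \<and> (\<forall>y\<in>topspace Y. f y \<in> \<phi> y)))"

definition selective :: "'b topology \<Rightarrow> 'a topology \<Rightarrow> bool" where
  "selective Y X \<longleftrightarrow>
     (\<forall>\<phi>. lsc_map Y X \<phi> \<and> (\<forall>y\<in>topspace Y. closedin X (\<phi> y)) \<longrightarrow>
        (\<exists>f. continuous_map Y X f \<and> (\<forall>y\<in>topspace Y. f y \<in> \<phi> y)))"

definition L_selective :: "'a topology \<Rightarrow> bool" where
  "L_selective X \<longleftrightarrow> selective omega_plus_one X"

definition strongly_L_selective :: "'a topology \<Rightarrow> bool" where
  "strongly_L_selective X \<longleftrightarrow> strongly_selective omega_plus_one X"

definition frechet_space :: "'a topology \<Rightarrow> bool" where
  "frechet_space X \<longleftrightarrow>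
     (\<forall>A x. A \<subseteq> topspace X \<and> x \<in> X closure_of A \<longrightarrow>
        (\<exists>s. (\<forall>n. s n \<in> A) \<and> limitin X s x sequentially))"

definition countably_tight :: "'a topology \<Rightarrow> bool" where
  "countably_tight X \<longleftrightarrow>
     (\<forall>A x. A \<subseteq> topspace X \<and> x \<in> X closure_of A \<longrightarrow>
        (\<exists>B. B \<subseteq> A \<and> countable B \<and> x \<in> X closure_of B))"

end

theory Submission
  imports Defs
begin

lemma enat_lim: "limitin omega_plus_one (\<lambda>n. enat n) \<infinity> sequentially"
  unfolding omega_plus_one_def limitin_canonical_iff
proof (rule order_tendstoI)
  fix a :: enat assume "a < \<infinity>"
  then obtain m where "a = enat m" by (cases a) auto
  then show "\<forall>\<^sub>F n in sequentially. a < enat n"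
    by (auto simp: eventually_sequentially intro: exI[of _ "Suc m"])
next
  fix a :: enat assume "a > \<infinity>" then show "\<forall>\<^sub>F n in sequentially. enat n < a" by simp
qed

lemma key:
  assumes "continuous_map omega_plus_one X f" "f \<infinity> = x" "\<forall>n. f (enat n) \<in> A"
  shows "\<exists>s. (\<forall>n. s n \<in> A) \<and> limitin X s x sequentially"
proof -
  have "limitin X (f \<circ> enat) (f \<infinity>) sequentially"
    using continuous_map_limit[OF assms(1) enat_lim] .
  then show ?thesis using assms(2,3) by (intro exI[of _ "f \<circ> enat"]) auto
qed

lemma topspace_opo [simp]: "topspace omega_plus_one = UNIV"
  by (simp add: omega_plus_one_def)

lemma openin_opo: "openin omega_plus_one S \<longleftrightarrow> (\<infinity> \<in> S \<longrightarrow> (\<exists>n::nat. {enat n <..} \<subseteq> S))"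
  by (simp add: omega_plus_one_def open_enat_iff)

lemma countable_case:
  assumes t1: "t1_space X" and L: "L_selective X" and cA: "countable A"
    and AX: "A \<subseteq> topspace X" and x: "x \<in> X closure_of A"
  shows "\<exists>s. (\<forall>n. s n \<in> A) \<and> limitin X s x sequentially"
proof (cases "x \<in> A")
  case True
  then show ?thesis using AX by (intro exI[of _ "\<lambda>_. x"]) auto
next
  case False
  have xX: "x \<in> topspace X" using x in_closure_of by metis
  have Ane: "A \<noteq> {}" using x by auto
  define g where "g = from_nat_into A"
  have rg: "range g = A" unfolding g_def using range_from_nat_into[OF Ane cA] .
  define \<phi> where "\<phi> y = (case y of enat n \<Rightarrow> g ` {..n} | \<infinity> \<Rightarrow> {x})" for y
  have lsc: "lsc_map omega_plus_one X \<phi>"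
    unfolding lsc_map_def
  proof (intro conjI allI impI ballI)
    fix y :: enat
    show "\<phi> y \<subseteq> topspace X" "\<phi> y \<noteq> {}"
      using rg AX xX by (auto simp: \<phi>_def split: enat.splits)
  next
    fix U assume U: "openin X U"
    show "openin omega_plus_one {y \<in> topspace omega_plus_one. \<phi> y \<inter> U \<noteq> {}}"
      unfolding openin_opo
    proof
      assume "\<infinity> \<in> {y \<in> topspace omega_plus_one. \<phi> y \<inter> U \<noteq> {}}"
      then have "x \<in> U" by (simp add: \<phi>_def)
      then obtain a where "a \<in> A" "a \<in> U" using x U in_closure_of by metis
      then obtain k where k: "g k \<in> U" using rg by auto
      show "\<exists>n. {enat n<..} \<subseteq> {y \<in> topspace omega_plus_one. \<phi> y \<inter> U \<noteq> {}}"
      proof (intro exI[of _ k] subsetI)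
        fix y assume "y \<in> {enat k<..}"
        then show "y \<in> {y \<in> topspace omega_plus_one. \<phi> y \<inter> U \<noteq> {}}"
        proof (cases y)
          case (enat n)
          assume "y \<in> {enat k<..}"
          then have "k \<le> n" using enat by simp
          then have "g k \<in> \<phi> y" using enat by (simp add: \<phi>_def)
          then show ?thesis using k by auto
        next
          case infinity
          then show ?thesis using \<open>x \<in> U\<close> by (simp add: \<phi>_def)
        qed
      qed
    qed
  qed
  have cl: "\<forall>y\<in>topspace omega_plus_one. closedin X (\<phi> y)"
  proof
    fix y :: enat
    show "closedin X (\<phi> y)"
      using t1 rg AX xX unfolding t1_space_closedin_finite
      by (cases y) (auto simp: \<phi>_def)
  qed
  obtain f where f: "continuous_map omega_plus_one X f" "\<forall>y\<in>topspace omega_plus_one. f y \<in> \<phi> y"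
    using L lsc cl unfolding L_selective_def selective_def by blast
  have "f \<infinity> = x" using f(2)[rule_format, of \<infinity>] by (simp add: \<phi>_def)
  moreover have "\<forall>n. f (enat n) \<in> A"
  proof
    fix n show "f (enat n) \<in> A" using f(2)[rule_format, of "enat n"] rg by (auto simp: \<phi>_def)
  qed
  ultimately show ?thesis by (rule key[OF f(1)])
qed

lemma strong_case:
  assumes L: "strongly_L_selective X"
  shows "frechet_space X"
  unfolding frechet_space_def
proof (intro allI impI, elim conjE)
  fix A x assume AX: "A \<subseteq> topspace X" and x: "x \<in> X closure_of A"
  have xX: "x \<in> topspace X" using x in_closure_of by metis
  have Ane: "A \<noteq> {}" using x by auto
  define \<phi> where "\<phi> y = (if y = \<infinity> then {x} else A)" for y :: enat
  have lsc: "lsc_map omega_plus_one X \<phi>"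
    unfolding lsc_map_def
  proof (intro conjI allI impI ballI)
    fix y :: enat
    show "\<phi> y \<subseteq> topspace X" "\<phi> y \<noteq> {}"
      using AX xX Ane by (auto simp: \<phi>_def)
  next
    fix U assume U: "openin X U"
    show "openin omega_plus_one {y \<in> topspace omega_plus_one. \<phi> y \<inter> U \<noteq> {}}"
      unfolding openin_opo
    proof
      assume "\<infinity> \<in> {y \<in> topspace omega_plus_one. \<phi> y \<inter> U \<noteq> {}}"
      then have "x \<in> U" by (simp add: \<phi>_def)
      then obtain a where "a \<in> A" "a \<in> U" using x U in_closure_of by metis
      show "\<exists>n. {enat n<..} \<subseteq> {y \<in> topspace omega_plus_one. \<phi> y \<inter> U \<noteq> {}}"
        using \<open>a \<in> A\<close> \<open>a \<in> U\<close> \<open>x \<in> U\<close> by (intro exI[of _ 0]) (auto simp: \<phi>_def)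
    qed
  qed
  obtain f where f: "continuous_map omega_plus_one X f" "\<forall>y\<in>topspace omega_plus_one. f y \<in> \<phi> y"
    using L lsc unfolding strongly_L_selective_def strongly_selective_def by blast
  have "f \<infinity> = x" using f(2)[rule_format, of \<infinity>] by (simp add: \<phi>_def)
  moreover have "\<forall>n. f (enat n) \<in> A"
  proof
    fix n show "f (enat n) \<in> A" using f(2)[rule_format, of "enat n"] by (simp add: \<phi>_def)
  qed
  ultimately show "\<exists>s. (\<forall>n. s n \<in> A) \<and> limitin X s x sequentially" by (rule key[OF f(1)])
qed

theorem mainTheorem14:
  fixes X :: "'a topology"
  assumes "t1_space X"
  shows "(countably_tight X \<and> L_selective X \<longrightarrow> frechet_space X) \<and>
         (L_selective X \<longrightarrow>
            (\<forall>S. S \<subseteq> topspace X \<and> countable S \<longrightarrow> frechet_space (subtopology X S))) \<and>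
         (strongly_L_selective X \<longrightarrow> frechet_space X)"
proof (intro conjI impI allI)
  assume a: "countably_tight X \<and> L_selective X"
  show "frechet_space X"
    unfolding frechet_space_def
  proof (intro allI impI, elim conjE)
    fix A x assume AX: "A \<subseteq> topspace X" and x: "x \<in> X closure_of A"
    obtain B where B: "B \<subseteq> A" "countable B" "x \<in> X closure_of B"
      using a AX x unfolding countably_tight_def by blast
    obtain s where "\<forall>n. s n \<in> B" "limitin X s x sequentially"
      using countable_case[OF assms _ B(2) _ B(3)] a B(1) AX by blast
    then show "\<exists>s. (\<forall>n. s n \<in> A) \<and> limitin X s x sequentially" using B(1) by blast
  qed
next
  fix S assume L: "L_selective X" and S: "S \<subseteq> topspace X \<and> countable S"
  show "frechet_space (subtopology X S)"
    unfolding frechet_space_def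
  proof (intro allI impI, elim conjE)
    fix A x assume AX: "A \<subseteq> topspace (subtopology X S)" and x: "x \<in> subtopology X S closure_of A"
    have AS: "A \<subseteq> S" "A \<subseteq> topspace X" using AX by auto
    have xS: "x \<in> S" "x \<in> X closure_of A"
      using x AS unfolding closure_of_subtopology by (auto simp: Int_absorb1)
    have cA: "countable A" using S AS countable_subset by blast
    obtain s where s: "\<forall>n. s n \<in> A" "limitin X s x sequentially"
      using countable_case[OF assms L cA AS(2) xS(2)] by blast
    then have "limitin (subtopology X S) s x sequentially"
      unfolding limitin_subtopology
    proof (intro conjI)
      show "\<forall>\<^sub>F a in sequentially. s a \<in> S"
        using s(1) AS(1) by (intro always_eventually) blast
    qed (use xS s in auto)
    then show "\<exists>s. (\<forall>n. s n \<in> A) \<and> limitin (subtopology X S) s x sequentially"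
      using s by blast
  qed
next
  assume "strongly_L_selective X"
  then show "frechet_space X" by (rule strong_case)
qed

end
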